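(* Assume (A1)–(A4). If $\beta$ is a point of differentiability of $p$, then $$\lim_{n\to\infty}\Big\langle\Big|\frac{H_n(\sigma)}{n}-p'(\beta)\Big|\Big\rangle_\beta=0\quad\text{a.s. and in }L^1(\mathbb P),$$ where $\langle\cdot\rangle_\beta$ denotes expectation under $\mu_n^\beta$.
   Context: Setting: $(\Omega,\mathcal F,\mathbb P)$ is a probability space, $(\Sigma_n)_{n\ge1}$ are Polish spaces with Borel probability measures $P_n$, and for each $n$, $(H_n(\sigma))_{\sigma\in\Sigma_n}$ is a centered Gaussian field defined on $\Omega$. For $\beta\in\mathbb R$ the Gibbs measure is $\mu_n^\beta(d\sigma)=e^{\beta H_n(\sigma)}P_n(d\sigma)/Z_n(\beta)$ with $Z_n(\beta)=\int e^{\beta H_n(\sigma)}P_n(d\sigma)$, and the free energy is $F_n(\beta)=\frac1n\log Z_n(\beta)$. Standing assumptions: (A1) there is a deterministic $p:\mathbb R\to\mathbb R$ with $F_n(\beta)\to p(\beta)$ $\mathbb P$-a.s. and in $L^1(\mathbb P)$ for every $\beta\in\mathbb R$; (A2) $\operatorname{Var}H_n(\sigma)=n$ for all $\sigma\in\Sigma_n$; (A3) $\operatorname{Cov}(H_n(\sigma^1),H_n(\sigma^2))\ge -n\mathscr E_n$ for all $\sigma^1,\sigma^2$, where $\mathscr E_n\ge0$ are constants with $\mathscr E_n\to0$; (A4) for each $n$ there are measurable $\varphi_{i,n}:\Sigma_n\to\mathbb R$ and i.i.d. standard normal $g_{i,n}$ on $\Omega$ ($i\ge1$) such that for each $\sigma$,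 a.s. $H_n(\sigma)=\sum_{i\ge1} g_{i,n}\varphi_{i,n}(\sigma)$, the series converging in $L^2(\mathbb P)$. *)

theory Defs
  imports "HOL-Probability.Probability"
begin

definition centered_gaussian :: "'w measure \<Rightarrow> ('w \<Rightarrow> real) \<Rightarrow> bool" where
  "centered_gaussian M X \<longleftrightarrow> X \<in> borel_measurable M \<and>
     ((\<exists>s>0. distributed M lborel X (normal_density 0 s)) \<or> (AE \<omega> in M. X \<omega> = 0))"

definition centered_gaussian_field :: "'w measure \<Rightarrow> 'i set \<Rightarrow> ('i \<Rightarrow> 'w \<Rightarrow> real) \<Rightarrow> bool" where
  "centered_gaussian_field M T X \<longleftrightarrow>
     (\<forall>I c. finite I \<longrightarrow> I \<subseteq> T \<longrightarrow> centered_gaussian M (\<lambda>\<omega>. \<Sum>i\<in>I. c i * X i \<omega>))"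

definition covariance :: "'w measure \<Rightarrow> ('w \<Rightarrow> real) \<Rightarrow> ('w \<Rightarrow> real) \<Rightarrow> real" where
  "covariance M X Y = (\<integral>\<omega>. (X \<omega> - (\<integral>x. X x \<partial>M)) * (Y \<omega> - (\<integral>x. Y x \<partial>M)) \<partial>M)"

definition partition_fn :: "'a measure \<Rightarrow> ('a \<Rightarrow> real) \<Rightarrow> real \<Rightarrow> real" where
  "partition_fn P h \<beta> = (\<integral>\<sigma>. exp (\<beta> * h \<sigma>) \<partial>P)"

definition free_energy :: "nat \<Rightarrow> 'a measure \<Rightarrow> ('a \<Rightarrow> real) \<Rightarrow> real \<Rightarrow> real" where
  "free_energy n P h \<beta> = ln (partition_fn P h \<beta>) / real n"

definition gibbs_avg :: "'a measure \<Rightarrow> ('a \<Rightarrow> real) \<Rightarrow> real \<Rightarrow> ('a \<Rightarrow> real) \<Rightarrow> real" where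
  "gibbs_avg P h \<beta> f = (\<integral>\<sigma>. f \<sigma> * exp (\<beta> * h \<sigma>) \<partial>P) / partition_fn P h \<beta>"

end

theory Submission
  imports Defs
begin


lemma pw_ineq:
  fixes u c :: real shows "u \<le> exp (u - c) + c - 1"
  using exp_ge_add_one_self[of "u - c"] by linarith

lemma key:
  fixes Q :: "'a measure" and h :: "'a \<Rightarrow> real"
  assumes Q: "prob_space Q" and hm: "h \<in> borel_measurable Q"
    and ip: "integrable Q (\<lambda>x. exp ((\<beta>+\<delta>) * h x))"
    and i0: "integrable Q (\<lambda>x. exp (\<beta> * h x))"
    and im: "integrable Q (\<lambda>x. exp ((\<beta>-\<delta>) * h x))"
    and d: "\<delta> > 0" and n: "n \<ge> 1"
  shows "gibbs_avg Q h \<beta> (\<lambda>x. \<bar>h x / real n - q\<bar>) \<le> ln 2 / (real n * \<delta>)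
     + max (free_energy n Q h (\<beta>+\<delta>) - free_energy n Q h \<beta> - \<delta> * q)
           (free_energy n Q h (\<beta>-\<delta>) - free_energy n Q h \<beta> + \<delta> * q) / \<delta>"
proof -
  interpret Q: prob_space Q by fact
  define t where "t = real n * \<delta>"
  have t: "t > 0" using d n by (simp add: t_def)
  define Zp where "Zp = partition_fn Q h (\<beta>+\<delta>)"
  define Z0 where "Z0 = partition_fn Q h \<beta>"
  define Zm where "Zm = partition_fn Q h (\<beta>-\<delta>)"
  have pos: "partition_fn Q h b > 0" if "integrable Q (\<lambda>x. exp (b * h x))" for b
  proof -
    have ge: "0 \<le> \<integral>x. exp (b * h x) \<partial>Q" by (rule integral_nonneg_AE) auto
    have "(\<integral>x. exp (b * h x) \<partial>Q) \<noteq> 0"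
    proof
      assume "(\<integral>x. exp (b * h x) \<partial>Q) = 0"
      then have "AE x in Q. exp (b * h x) = 0" using that by (subst (asm) integral_nonneg_eq_0_iff_AE) auto
      then have "AE x in Q. False" by simp
      then show False using Q.AE_False by simp
    qed
    then have "0 < \<integral>x. exp (b * h x) \<partial>Q" using ge by linarith
    then show ?thesis by (simp add: partition_fn_def)
  qed
  have Zp: "Zp > 0" and Z0: "Z0 > 0" and Zm: "Zm > 0"
    using pos ip i0 im by (auto simp: Zp_def Z0_def Zm_def)
  define A where "A = Zp * exp (- t * q)"
  define B where "B = Zm * exp (t * q)"
  define c where "c = ln ((A + B) / Z0)"
  have AB: "A > 0" "B > 0" using Zp Zm by (auto simp: A_def B_def)
  have expc: "exp (- c) = Z0 / (A + B)" using AB Z0 by (simp add: c_def exp_minus)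
  define f where "f x = \<bar>h x / real n - q\<bar>" for x
  define R where "R x = exp (- c) * (exp (- t * q) * exp ((\<beta>+\<delta>) * h x) + exp (t * q) * exp ((\<beta>-\<delta>) * h x))
      + (c - 1) * exp (\<beta> * h x)" for x
  have ident1: "exp (t * (h x / real n - q)) * exp (\<beta> * h x) = exp (- t * q) * exp ((\<beta>+\<delta>) * h x)" for x
  proof -
    have "t * (h x / real n - q) + \<beta> * h x = - t * q + (\<beta>+\<delta>) * h x"
      using n by (simp add: t_def field_simps)
    then show ?thesis by (simp flip: exp_add)
  qed
  have ident2: "exp (- (t * (h x / real n - q))) * exp (\<beta> * h x) = exp (t * q) * exp ((\<beta>-\<delta>) * h x)" for x
  proof -
    have "- (t * (h x / real n - q)) + \<beta> * h x = t * q + (\<beta>-\<delta>) * h x"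
      using n by (simp add: t_def field_simps)
    then show ?thesis by (simp flip: exp_add)
  qed
  have pw: "t * f x * exp (\<beta> * h x) \<le> R x" for x
  proof -
    let ?y = "h x / real n - q"
    have "t * f x \<le> exp (t * f x - c) + c - 1" by (rule pw_ineq)
    also have "exp (t * f x - c) = exp (-c) * exp (t * \<bar>?y\<bar>)" by (simp add: f_def exp_diff exp_minus field_simps)
    also have "exp (t * \<bar>?y\<bar>) \<le> exp (t * ?y) + exp (- (t * ?y))"
    proof (cases "?y \<ge> 0")
      case True then show ?thesis by (simp add: add_increasing2)
    next
      case False
      then have "exp (t * \<bar>?y\<bar>) = exp (- (t * ?y))" by (simp add: algebra_simps)
      then show ?thesis by (simp add: add_increasing)
    qed
    finally have "t * f x \<le> exp (-c) * (exp (t * ?y) + exp (- (t * ?y))) + c - 1"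
      by (smt (verit) exp_gt_zero mult_left_mono)
    then have "t * f x * exp (\<beta> * h x) \<le> (exp (-c) * (exp (t * ?y) + exp (- (t * ?y))) + c - 1) * exp (\<beta> * h x)"
      by (simp add: mult_right_mono)
    also have "\<dots> = exp (-c) * (exp (t * ?y) * exp (\<beta> * h x) + exp (- (t * ?y)) * exp (\<beta> * h x)) + (c - 1) * exp (\<beta> * h x)"
      by (simp add: algebra_simps)
    also have "\<dots> = R x" unfolding R_def ident1 ident2 by simp
    finally show ?thesis .
  qed
  have Rint: "integrable Q R" unfolding R_def using ip i0 im by auto
  have fmeas: "(\<lambda>x. t * f x * exp (\<beta> * h x)) \<in> borel_measurable Q" using hm unfolding f_def by measurable
  have fint: "integrable Q (\<lambda>x. t * f x * exp (\<beta> * h x))"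
  proof (rule Bochner_Integration.integrable_bound[OF Rint fmeas])
    show "AE x in Q. norm (t * f x * exp (\<beta> * h x)) \<le> norm (R x)"
      using pw t by (auto simp: f_def intro!: AE_I2) (smt (verit) exp_gt_zero mult_nonneg_nonneg pw)
  qed
  have IR: "(\<integral>x. R x \<partial>Q) = c * Z0"
  proof -
    have "(\<integral>x. R x \<partial>Q) = exp (- c) * (exp (- t * q) * Zp + exp (t * q) * Zm) + (c - 1) * Z0"
      unfolding R_def Zp_def Zm_def Z0_def partition_fn_def using ip i0 im by simp
    also have "\<dots> = exp (-c) * (A + B) + (c - 1) * Z0" by (simp add: A_def B_def algebra_simps)
    also have "\<dots> = c * Z0" using expc AB by (simp add: field_simps)
    finally show ?thesis .
  qed
  have "t * (\<integral>x. f x * exp (\<beta> * h x) \<partial>Q) = (\<integral>x. t * f x * exp (\<beta> * h x) \<partial>Q)"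
    by (simp add: mult.assoc)
  also have "\<dots> \<le> (\<integral>x. R x \<partial>Q)" by (rule integral_mono[OF fint Rint pw])
  finally have main: "t * (\<integral>x. f x * exp (\<beta> * h x) \<partial>Q) \<le> c * Z0" using IR by simp
  have ga: "gibbs_avg Q h \<beta> (\<lambda>x. \<bar>h x / real n - q\<bar>) \<le> c / t"
  proof -
    have "gibbs_avg Q h \<beta> (\<lambda>x. \<bar>h x / real n - q\<bar>) = (\<integral>x. f x * exp (\<beta> * h x) \<partial>Q) / Z0"
      by (simp add: gibbs_avg_def f_def Z0_def)
    also have "\<dots> \<le> c / t" using main t Z0 by (simp add: field_simps)
    finally show ?thesis .
  qed
  have lnA: "ln A = real n * free_energy n Q h (\<beta>+\<delta>) - t * q"
    using Zp n by (simp add: A_def ln_mult free_energy_def Zp_def)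
  have lnB: "ln B = real n * free_energy n Q h (\<beta>-\<delta>) + t * q"
    using Zm n by (simp add: B_def ln_mult free_energy_def Zm_def)
  have lnZ: "ln Z0 = real n * free_energy n Q h \<beta>"
    using n by (simp add: free_energy_def Z0_def)
  have "ln (A + B) \<le> ln (2 * max A B)" using AB by (intro ln_mono) auto
  also have "\<dots> = ln 2 + max (ln A) (ln B)" using AB by (simp add: ln_mult max_def)
  finally have lAB: "ln (A + B) \<le> ln 2 + max (ln A) (ln B)" .
  have cle: "c \<le> ln 2 + max (ln A - ln Z0) (ln B - ln Z0)"
    using lAB AB Z0 by (simp add: c_def ln_div max_def split: if_splits)
  have "c / t \<le> (ln 2 + max (ln A - ln Z0) (ln B - ln Z0)) / t"
    using cle t by (simp add: divide_right_mono)
  also have "\<dots> = ln 2 / (real n * \<delta>)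
     + max (free_energy n Q h (\<beta>+\<delta>) - free_energy n Q h \<beta> - \<delta> * q)
           (free_energy n Q h (\<beta>-\<delta>) - free_energy n Q h \<beta> + \<delta> * q) / \<delta>"
  proof -
    have e1: "ln A - ln Z0 = t * (free_energy n Q h (\<beta>+\<delta>) - free_energy n Q h \<beta> - \<delta> * q) / \<delta>"
      using d by (simp add: lnA lnZ t_def field_simps)
    have e2: "ln B - ln Z0 = t * (free_energy n Q h (\<beta>-\<delta>) - free_energy n Q h \<beta> + \<delta> * q) / \<delta>"
      using d by (simp add: lnB lnZ t_def field_simps)
    have mx: "max (t * a / \<delta>) (t * b / \<delta>) = t * max a b / \<delta>" for a b
      using t d by (simp add: max_def field_simps)
    show ?thesis unfolding e1 e2 mx using t d n by (simp add: add_divide_distrib t_def)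
  qed
  finally show ?thesis using ga by linarith
qed



lemma nd_bound:
  fixes s b x :: real assumes s: "s > 0"
  shows "normal_density 0 s x * exp (b * x) \<le> (sqrt 2 * exp (b\<^sup>2 * s\<^sup>2)) * normal_density 0 (sqrt 2 * s) x"
proof -
  have sq: "sqrt (2 * pi * (sqrt 2 * s)\<^sup>2) = sqrt 2 * sqrt (2 * pi * s\<^sup>2)"
    by (simp add: power_mult_distrib real_sqrt_mult[symmetric] algebra_simps)
  have k: "b * x \<le> b\<^sup>2 * s\<^sup>2 + x\<^sup>2 / (4 * s\<^sup>2)"
  proof -
    have "0 \<le> (b * s - x / (2 * s))\<^sup>2" by simp
    also have "\<dots> = b\<^sup>2 * s\<^sup>2 + x\<^sup>2 / (4 * s\<^sup>2) - b * x" using s by (simp add: power2_eq_square field_simps)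
    finally show ?thesis by simp
  qed
  have h2: "x\<^sup>2 / (2 * s\<^sup>2) = x\<^sup>2 / (4 * s\<^sup>2) + x\<^sup>2 / (4 * s\<^sup>2)" using s by (simp add: field_simps)
  have h3: "2 * (sqrt 2 * s)\<^sup>2 = 4 * s\<^sup>2" by (simp add: power_mult_distrib)
  have e: "- x\<^sup>2 / (2 * s\<^sup>2) + b * x \<le> b\<^sup>2 * s\<^sup>2 + (- x\<^sup>2 / (2 * (sqrt 2 * s)\<^sup>2))"
    unfolding h3 using k h2 by linarith
  have pos: "0 < sqrt (2 * pi * s\<^sup>2)" using s by simp
  have "normal_density 0 s x * exp (b * x) = exp (- x\<^sup>2 / (2 * s\<^sup>2) + b * x) / sqrt (2 * pi * s\<^sup>2)"
    by (simp add: normal_density_def exp_add[symmetric] exp_diff)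
  also have "\<dots> \<le> exp (b\<^sup>2 * s\<^sup>2 + (- x\<^sup>2 / (2 * (sqrt 2 * s)\<^sup>2))) / sqrt (2 * pi * s\<^sup>2)"
    using e pos by (intro divide_right_mono) auto
  also have "\<dots> = (sqrt 2 * exp (b\<^sup>2 * s\<^sup>2)) * normal_density 0 (sqrt 2 * s) x"
    unfolding normal_density_def sq by (simp add: exp_add[symmetric] field_simps)
  finally show ?thesis .
qed

lemma nn_normal: "s > 0 \<Longrightarrow> (\<integral>\<^sup>+x. ennreal (normal_density m s x) \<partial>lborel) = 1"
  by (subst nn_integral_eq_integral) auto

lemma gauss_mgf_bound:
  fixes M :: "'w measure" and X :: "'w \<Rightarrow> real"
  assumes D: "distributed M lborel X (normal_density 0 s)" and s: "s > 0"
  shows "(\<integral>\<^sup>+\<omega>. ennreal (exp (b * X \<omega>)) \<partial>M) \<le> ennreal (sqrt 2 * exp (b\<^sup>2 * s\<^sup>2))"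
proof -
  have "(\<integral>\<^sup>+\<omega>. ennreal (exp (b * X \<omega>)) \<partial>M) = (\<integral>\<^sup>+x. ennreal (normal_density 0 s x) * ennreal (exp (b * x)) \<partial>lborel)"
    by (rule distributed_nn_integral[OF D, symmetric]) simp
  also have "\<dots> \<le> (\<integral>\<^sup>+x. ennreal (sqrt 2 * exp (b\<^sup>2 * s\<^sup>2)) * ennreal (normal_density 0 (sqrt 2 * s) x) \<partial>lborel)"
    by (intro nn_integral_mono) (simp add: ennreal_mult'[symmetric] nd_bound[OF s] del: ennreal_mult')
  also have "\<dots> = ennreal (sqrt 2 * exp (b\<^sup>2 * s\<^sup>2))"
    by (subst nn_integral_cmult) (use s in \<open>auto simp: nn_normal\<close>)
  finally show ?thesis .
qed



lemma squeeze:
  fixes G :: "nat \<Rightarrow> real" and U :: "nat \<Rightarrow> nat \<Rightarrow> real"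
  assumes b: "\<And>k n. n \<ge> 1 \<Longrightarrow> 0 \<le> G n \<and> G n \<le> U k n"
    and U: "\<And>k. (\<lambda>n. U k n) \<longlonglongrightarrow> L k" and L: "L \<longlonglongrightarrow> 0"
  shows "G \<longlonglongrightarrow> 0"
proof (rule tendstoI)
  fix e :: real assume e: "e > 0"
  then have "eventually (\<lambda>k. dist (L k) 0 < e/2) sequentially" using L by (intro tendstoD) auto
  then obtain k where k: "\<bar>L k\<bar> < e/2" by (auto simp: eventually_sequentially)
  have "eventually (\<lambda>n. dist (U k n) (L k) < e/2) sequentially" using U[of k] e by (intro tendstoD) auto
  moreover have "eventually (\<lambda>n. n \<ge> 1) sequentially" by (rule eventually_ge_at_top)
  ultimately show "eventually (\<lambda>n. dist (G n) 0 < e) sequentially"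
  proof eventually_elim
    case (elim n)
    then show ?case using b[of n k] k by (auto simp: dist_real_def abs_if split: if_splits)
  qed
qed

lemma maxb:
  fixes d :: real assumes d: "d > 0"
  shows "max (Fp - F0 - d * q) (Fm - F0 + d * q) / d
    \<le> (\<bar>Fp - pp\<bar> + \<bar>Fm - pm\<bar> + 2 * \<bar>F0 - p0\<bar>) / d + max (pp - p0 - d * q) (pm - p0 + d * q) / d"
proof -
  have "max (Fp - F0 - d * q) (Fm - F0 + d * q)
    \<le> (\<bar>Fp - pp\<bar> + \<bar>Fm - pm\<bar> + 2 * \<bar>F0 - p0\<bar>) + max (pp - p0 - d * q) (pm - p0 + d * q)"
    by (simp add: max_def abs_if split: if_splits) 
  then show ?thesis using d by (simp add: add_divide_distrib[symmetric] divide_right_mono)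
qed



theorem mainTheorem10:
  fixes M :: "'w measure"
    and P :: "nat \<Rightarrow> 'a::polish_space measure"
    and H :: "nat \<Rightarrow> 'a \<Rightarrow> 'w \<Rightarrow> real"
    and p :: "real \<Rightarrow> real"
    and E :: "nat \<Rightarrow> real"
    and \<phi> :: "nat \<Rightarrow> nat \<Rightarrow> 'a \<Rightarrow> real"
    and g :: "nat \<Rightarrow> nat \<Rightarrow> 'w \<Rightarrow> real"
    and \<beta> p' :: real
  assumes M: "prob_space M"
    and P: "\<And>n. n \<ge> 1 \<Longrightarrow> prob_space (P n) \<and> sets (P n) = sets borel"
    and H_gauss: "\<And>n. n \<ge> 1 \<Longrightarrow> centered_gaussian_field M UNIV (H n)"
    and H_meas: "\<And>n. n \<ge> 1 \<Longrightarrow> (\<lambda>(\<sigma>, \<omega>). H n \<sigma> \<omega>) \<in> borel_measurable (P n \<Otimes>\<^sub>M M)"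
    and A1_ae: "\<And>b. AE \<omega> in M. (\<lambda>n. free_energy n (P n) (\<lambda>\<sigma>. H n \<sigma> \<omega>) b) \<longlonglongrightarrow> p b"
    and A1_int: "\<And>b n. n \<ge> 1 \<Longrightarrow> integrable M (\<lambda>\<omega>. free_energy n (P n) (\<lambda>\<sigma>. H n \<sigma> \<omega>) b)"
    and A1_L1: "\<And>b. (\<lambda>n. \<integral>\<omega>. \<bar>free_energy n (P n) (\<lambda>\<sigma>. H n \<sigma> \<omega>) b - p b\<bar> \<partial>M) \<longlonglongrightarrow> 0"
    and A2: "\<And>n \<sigma>. n \<ge> 1 \<Longrightarrow> prob_space.variance M (H n \<sigma>) = real n"
    and A3_nonneg: "\<And>n. n \<ge> 1 \<Longrightarrow> E n \<ge> 0"
    and A3_lim: "E \<longlonglongrightarrow> 0"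
    and A3: "\<And>n \<sigma>1 \<sigma>2. n \<ge> 1 \<Longrightarrow> covariance M (H n \<sigma>1) (H n \<sigma>2) \<ge> - real n * E n"
    and A4_phi: "\<And>n i. n \<ge> 1 \<Longrightarrow> \<phi> n i \<in> borel_measurable (P n)"
    and A4_indep: "\<And>n. n \<ge> 1 \<Longrightarrow> prob_space.indep_vars M (\<lambda>_. borel) (g n) UNIV"
    and A4_normal: "\<And>n i. n \<ge> 1 \<Longrightarrow> distributed M lborel (g n i) (normal_density 0 1)"
    and A4_series: "\<And>n \<sigma>. n \<ge> 1 \<Longrightarrow>
       (\<lambda>N. \<integral>\<omega>. (H n \<sigma> \<omega> - (\<Sum>i<N. g n i \<omega> * \<phi> n i \<sigma>))\<^sup>2 \<partial>M) \<longlonglongrightarrow> 0"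
    and diff: "(p has_real_derivative p') (at \<beta>)"
  shows "(AE \<omega> in M. (\<lambda>n. gibbs_avg (P n) (\<lambda>\<sigma>. H n \<sigma> \<omega>) \<beta>
                         (\<lambda>\<sigma>. \<bar>H n \<sigma> \<omega> / real n - p'\<bar>)) \<longlonglongrightarrow> 0)
       \<and> (\<forall>\<^sub>F n in sequentially. integrable M (\<lambda>\<omega>. gibbs_avg (P n) (\<lambda>\<sigma>. H n \<sigma> \<omega>) \<beta>
                         (\<lambda>\<sigma>. \<bar>H n \<sigma> \<omega> / real n - p'\<bar>)))
       \<and> (\<lambda>n. \<integral>\<omega>. \<bar>gibbs_avg (P n) (\<lambda>\<sigma>. H n \<sigma> \<omega>) \<beta>
                         (\<lambda>\<sigma>. \<bar>H n \<sigma> \<omega> / real n - p'\<bar>)\<bar> \<partial>M) \<longlonglongrightarrow> 0"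
proof -
  interpret M: prob_space M by fact
  define F where "F n b \<omega> = free_energy n (P n) (\<lambda>\<sigma>. H n \<sigma> \<omega>) b" for n b \<omega>
  define G where "G n \<omega> = gibbs_avg (P n) (\<lambda>\<sigma>. H n \<sigma> \<omega>) \<beta> (\<lambda>\<sigma>. \<bar>H n \<sigma> \<omega> / real n - p'\<bar>)" for n \<omega>
  define \<delta> where "\<delta> k = 1 / real (Suc k)" for k
  define L where "L k = max (p (\<beta>+\<delta> k) - p \<beta> - \<delta> k * p') (p (\<beta>-\<delta> k) - p \<beta> + \<delta> k * p') / \<delta> k" for k
  define U where "U k n \<omega> = ln 2 / (real n * \<delta> k) + (\<bar>F n (\<beta>+\<delta> k) \<omega> - p (\<beta>+\<delta> k)\<bar> + \<bar>F n (\<beta>-\<delta> k) \<omega> - p (\<beta>-\<delta> k)\<bar>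
       + 2 * \<bar>F n \<beta> \<omega> - p \<beta>\<bar>) / \<delta> k + L k" for k n \<omega>
  have \<delta>pos: "\<delta> k > 0" for k by (simp add: \<delta>_def)
  have Pp: "prob_space (P n)" if "n \<ge> 1" for n using P[OF that] by simp
  have Psets: "sets (P n) = sets borel" if "n \<ge> 1" for n using P[OF that] by simp
  have Hswap: "(\<lambda>(\<omega>, \<sigma>). H n \<sigma> \<omega>) \<in> borel_measurable (M \<Otimes>\<^sub>M P n)" if n: "n \<ge> 1" for n
  proof -
    have "(\<lambda>x. (\<lambda>(\<sigma>, \<omega>). H n \<sigma> \<omega>) ((\<lambda>(x, y). (y, x)) x)) \<in> borel_measurable (M \<Otimes>\<^sub>M P n)"
      by (rule measurable_compose[OF measurable_pair_swap' H_meas[OF n]])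
    then show ?thesis by (simp add: case_prod_beta)
  qed
  have Hsec: "(\<lambda>\<sigma>. H n \<sigma> \<omega>) \<in> borel_measurable (P n)" if n: "n \<ge> 1" and w: "\<omega> \<in> space M" for n \<omega>
    using measurable_compose[OF measurable_Pair2'[OF w] H_meas[OF n]] by simp
  have distr: "distributed M lborel (H n \<sigma>) (normal_density 0 (sqrt (real n)))" if n: "n \<ge> 1" for n \<sigma>
  proof -
    have cgf: "\<forall>I c. finite I \<longrightarrow> I \<subseteq> UNIV \<longrightarrow> centered_gaussian M (\<lambda>\<omega>. \<Sum>i\<in>I. c i * H n i \<omega>)"
      using H_gauss[OF n] unfolding centered_gaussian_field_def .
    have "centered_gaussian M (\<lambda>\<omega>. \<Sum>i\<in>{\<sigma>}. (\<lambda>_. 1) i * H n i \<omega>)"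
      using cgf[rule_format, of "{\<sigma>}" "\<lambda>_. 1"] by simp
    moreover have "(\<lambda>\<omega>. \<Sum>i\<in>{\<sigma>}. (\<lambda>_. 1) i * H n i \<omega>) = H n \<sigma>" by (rule ext) simp
    ultimately have cg: "centered_gaussian M (H n \<sigma>)" by (simp only:)
    then have hm: "H n \<sigma> \<in> borel_measurable M" unfolding centered_gaussian_def by blast
    have var: "M.variance (H n \<sigma>) = real n" using A2[OF n] .
    show ?thesis
    proof (cases "AE \<omega> in M. H n \<sigma> \<omega> = 0")
      case True
      have e0: "(\<integral>\<omega>. H n \<sigma> \<omega> \<partial>M) = (\<integral>\<omega>. 0 \<partial>M)"
        by (rule integral_cong_AE[OF hm _ True]) simp
      have hm2: "(\<lambda>\<omega>. (H n \<sigma> \<omega> - 0)\<^sup>2) \<in> borel_measurable M" using hm by measurable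
      have "M.variance (H n \<sigma>) = (\<integral>\<omega>. (H n \<sigma> \<omega> - 0)\<^sup>2 \<partial>M)"
        using e0 by simp
      also have "\<dots> = (\<integral>\<omega>. 0 \<partial>M)"
        by (rule integral_cong_AE[OF hm2]) (simp, use True in \<open>eventually_elim, simp\<close>)
      finally have "M.variance (H n \<sigma>) = (\<integral>\<omega>. 0 \<partial>M)" .
      then have "real n = 0" using var by simp
      then show ?thesis using n by simp
    next
      case False
      then obtain s where s: "s > 0" and D: "distributed M lborel (H n \<sigma>) (normal_density 0 s)"
        using cg False unfolding centered_gaussian_def by blast
      have vs: "M.variance (H n \<sigma>) = s\<^sup>2" by (rule M.normal_distributed_variance[OF s D])
      have "s\<^sup>2 = real n" using vs var by (rule subst)
      then have "s = sqrt (real n)" using s by (metis abs_of_pos real_sqrt_abs)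
      then show ?thesis using D by simp
    qed
  qed
  have intAE: "AE \<omega> in M. integrable (P n) (\<lambda>\<sigma>. exp (b * H n \<sigma> \<omega>))" if n: "n \<ge> 1" for n b
  proof -
    interpret PP: pair_prob_space "P n" M
      using Pp[OF n] M by (simp add: pair_prob_space_def pair_sigma_finite_def prob_space_imp_sigma_finite)
    define K where "K = sqrt 2 * exp (b\<^sup>2 * (sqrt (real n))\<^sup>2)"
    have fm: "(\<lambda>(\<sigma>, \<omega>). ennreal (exp (b * H n \<sigma> \<omega>))) \<in> borel_measurable (P n \<Otimes>\<^sub>M M)"
    proof -
      have c: "(\<lambda>x::real. ennreal (exp (b * x))) \<in> borel_measurable borel" by measurable
      have e: "(\<lambda>(\<sigma>, \<omega>). ennreal (exp (b * H n \<sigma> \<omega>))) = (\<lambda>x::real. ennreal (exp (b * x))) \<circ> (\<lambda>(\<sigma>, \<omega>). H n \<sigma> \<omega>)"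
        by (rule ext) (simp split: prod.split)
      show ?thesis unfolding e by (rule measurable_comp[OF H_meas[OF n] c])
    qed
    have fm': "(\<lambda>(\<omega>, \<sigma>). ennreal (exp (b * H n \<sigma> \<omega>))) \<in> borel_measurable (M \<Otimes>\<^sub>M P n)"
    proof -
      have c: "(\<lambda>x::real. ennreal (exp (b * x))) \<in> borel_measurable borel" by measurable
      have e: "(\<lambda>(\<omega>, \<sigma>). ennreal (exp (b * H n \<sigma> \<omega>))) = (\<lambda>x::real. ennreal (exp (b * x))) \<circ> (\<lambda>(\<omega>, \<sigma>). H n \<sigma> \<omega>)"
        by (rule ext) (simp split: prod.split)
      show ?thesis unfolding e by (rule measurable_comp[OF Hswap[OF n] c])
    qed
    have "(\<integral>\<^sup>+\<omega>. (\<integral>\<^sup>+\<sigma>. ennreal (exp (b * H n \<sigma> \<omega>)) \<partial>P n) \<partial>M)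
        = (\<integral>\<^sup>+\<sigma>. (\<integral>\<^sup>+\<omega>. ennreal (exp (b * H n \<sigma> \<omega>)) \<partial>M) \<partial>P n)"
      by (rule PP.Fubini'[OF fm])
    also have "\<dots> \<le> (\<integral>\<^sup>+\<sigma>. ennreal K \<partial>P n)"
    proof (rule nn_integral_mono)
      fix \<sigma> show "(\<integral>\<^sup>+\<omega>. ennreal (exp (b * H n \<sigma> \<omega>)) \<partial>M) \<le> ennreal K"
        unfolding K_def by (rule gauss_mgf_bound[OF distr[OF n]]) (use n in simp)
    qed
    also have "\<dots> = ennreal K" using PP.M1.emeasure_space_1 by simp
    finally have le: "(\<integral>\<^sup>+\<omega>. (\<integral>\<^sup>+\<sigma>. ennreal (exp (b * H n \<sigma> \<omega>)) \<partial>P n) \<partial>M) \<le> ennreal K" .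
    have fin: "(\<integral>\<^sup>+\<omega>. (\<integral>\<^sup>+\<sigma>. ennreal (exp (b * H n \<sigma> \<omega>)) \<partial>P n) \<partial>M) \<noteq> \<infinity>"
      using le by (auto simp: top_unique)
    have mm: "(\<lambda>\<omega>. \<integral>\<^sup>+\<sigma>. ennreal (exp (b * H n \<sigma> \<omega>)) \<partial>P n) \<in> borel_measurable M"
      by (rule PP.M1.borel_measurable_nn_integral) (use fm' in simp)
    have "AE \<omega> in M. (\<integral>\<^sup>+\<sigma>. ennreal (exp (b * H n \<sigma> \<omega>)) \<partial>P n) \<noteq> \<infinity>"
      by (rule nn_integral_PInf_AE[OF mm fin])
    then show ?thesis
    proof (rule AE_mp[OF _ AE_I2[OF impI]], goal_cases)
      case (1 \<omega>)
      show ?case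
      proof (rule integrableI_bounded)
        show "(\<lambda>\<sigma>. exp (b * H n \<sigma> \<omega>)) \<in> borel_measurable (P n)" using Hsec[OF n 1(1)] by simp
        show "(\<integral>\<^sup>+\<sigma>. ennreal (norm (exp (b * H n \<sigma> \<omega>))) \<partial>P n) < \<infinity>"
          using 1(2) by (simp add: top.not_eq_extremum)
      qed
    qed
  qed
  have intAE': "AE \<omega> in M. 1 \<le> n \<longrightarrow> integrable (P n) (\<lambda>\<sigma>. exp (b * H n \<sigma> \<omega>))" for n b
  proof (cases "1 \<le> n")
    case True then show ?thesis using intAE[OF True, of b] by (auto elim: AE_mp intro: AE_I2)
  qed simp
  have "\<forall>n k. AE \<omega> in M. (1 \<le> n \<longrightarrow> integrable (P n) (\<lambda>\<sigma>. exp ((\<beta>+\<delta> k) * H n \<sigma> \<omega>)))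
        \<and> (1 \<le> n \<longrightarrow> integrable (P n) (\<lambda>\<sigma>. exp ((\<beta>-\<delta> k) * H n \<sigma> \<omega>)))
        \<and> (1 \<le> n \<longrightarrow> integrable (P n) (\<lambda>\<sigma>. exp (\<beta> * H n \<sigma> \<omega>)))"
    using intAE' by (simp add: AE_conj_iff)
  then have good: "AE \<omega> in M. \<forall>n k. (1 \<le> n \<longrightarrow> integrable (P n) (\<lambda>\<sigma>. exp ((\<beta>+\<delta> k) * H n \<sigma> \<omega>)))
        \<and> (1 \<le> n \<longrightarrow> integrable (P n) (\<lambda>\<sigma>. exp ((\<beta>-\<delta> k) * H n \<sigma> \<omega>)))
        \<and> (1 \<le> n \<longrightarrow> integrable (P n) (\<lambda>\<sigma>. exp (\<beta> * H n \<sigma> \<omega>)))"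
    by (simp add: AE_all_countable)
  have bound: "AE \<omega> in M. \<forall>n k. 1 \<le> n \<longrightarrow> G n \<omega> \<le> U k n \<omega>"
    using good AE_space
  proof eventually_elim
    case (elim \<omega>)
    show ?case
    proof (intro allI impI)
      fix n k :: nat assume n: "1 \<le> n"
      have "G n \<omega> \<le> ln 2 / (real n * \<delta> k)
         + max (F n (\<beta>+\<delta> k) \<omega> - F n \<beta> \<omega> - \<delta> k * p') (F n (\<beta>-\<delta> k) \<omega> - F n \<beta> \<omega> + \<delta> k * p') / \<delta> k"
        unfolding G_def F_def
        by (rule key[OF Pp[OF n] Hsec[OF n elim(2)]]) (use elim(1) n \<delta>pos in auto)
      also have "\<dots> \<le> U k n \<omega>"
        using maxb[OF \<delta>pos[of k], of "F n (\<beta>+\<delta> k) \<omega>" "F n \<beta> \<omega>" p' "F n (\<beta>-\<delta> k) \<omega>"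
            "p (\<beta>+\<delta> k)" "p (\<beta>-\<delta> k)" "p \<beta>"]
        unfolding U_def L_def by linarith
      finally show "G n \<omega> \<le> U k n \<omega>" .
    qed
  qed
  have Gnn: "0 \<le> G n \<omega>" for n \<omega>
    unfolding G_def gibbs_avg_def partition_fn_def
    by (intro divide_nonneg_nonneg integral_nonneg_AE AE_I2) auto
  have Fconv: "AE \<omega> in M. \<forall>k. (\<lambda>n. F n (\<beta>+\<delta> k) \<omega>) \<longlonglongrightarrow> p (\<beta>+\<delta> k) \<and> (\<lambda>n. F n (\<beta>-\<delta> k) \<omega>) \<longlonglongrightarrow> p (\<beta>-\<delta> k)
      \<and> (\<lambda>n. F n \<beta> \<omega>) \<longlonglongrightarrow> p \<beta>"
    unfolding F_def AE_all_countable AE_conj_iff using A1_ae by blast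
  have lnconv: "(\<lambda>n. ln 2 / (real n * \<delta> k)) \<longlonglongrightarrow> 0" for k
  proof -
    have "(\<lambda>n. (ln 2 / \<delta> k) * inverse (real n)) \<longlonglongrightarrow> (ln 2 / \<delta> k) * 0"
      by (intro tendsto_mult tendsto_const lim_inverse_n)
    moreover have "(\<lambda>n. (ln 2 / \<delta> k) * inverse (real n)) = (\<lambda>n. ln 2 / (real n * \<delta> k))"
      by (rule ext) (simp add: field_simps)
    ultimately show ?thesis by simp
  qed
  have absconv: "(\<lambda>n. \<bar>f n - c\<bar>) \<longlonglongrightarrow> 0" if "f \<longlonglongrightarrow> c" for f :: "nat \<Rightarrow> real" and c
    using tendsto_rabs_zero[OF LIM_zero[OF that]] .
  have conv: "AE \<omega> in M. \<forall>k. (\<lambda>n. U k n \<omega>) \<longlonglongrightarrow> L k"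
    using Fconv
  proof eventually_elim
    case (elim \<omega>)
    show ?case
    proof
      fix k
      have "(\<lambda>n. U k n \<omega>) \<longlonglongrightarrow> 0 + (0 + 0 + 2 * 0) / \<delta> k + L k"
        unfolding U_def using elim[rule_format, of k]
        by (intro tendsto_add tendsto_divide tendsto_mult tendsto_const lnconv absconv) (auto simp: \<delta>pos less_imp_neq[symmetric])
      then show "(\<lambda>n. U k n \<omega>) \<longlonglongrightarrow> L k" by simp
    qed
  qed
  have \<delta>0: "\<delta> \<longlonglongrightarrow> 0"
    using LIMSEQ_inverse_real_of_nat unfolding \<delta>_def by (simp add: inverse_eq_divide)
  have Lconv: "L \<longlonglongrightarrow> 0"
  proof -
    have dq: "((\<lambda>y. (p y - p \<beta>) / (y - \<beta>)) \<longlongrightarrow> p') (at \<beta>)"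
      using diff by (simp add: has_field_derivative_iff)
    have A: "(\<lambda>k. (p (\<beta>+\<delta> k) - p \<beta>) / ((\<beta>+\<delta> k) - \<beta>)) \<longlonglongrightarrow> p'"
    proof -
      have "(\<lambda>k. \<beta> + \<delta> k) \<longlonglongrightarrow> \<beta> + 0" by (intro tendsto_add tendsto_const \<delta>0)
      then have l: "(\<lambda>k. \<beta> + \<delta> k) \<longlonglongrightarrow> \<beta>" by simp
      have m: "\<And>i. (\<lambda>k. \<beta> + \<delta> k) i \<in> UNIV - {\<beta>}" using \<delta>pos by (simp add: less_imp_neq[symmetric])
      show ?thesis using dq[unfolded tendsto_at_iff_sequentially, rule_format, OF m l] by (simp add: comp_def)
    qed
    have B: "(\<lambda>k. (p (\<beta>-\<delta> k) - p \<beta>) / ((\<beta>-\<delta> k) - \<beta>)) \<longlonglongrightarrow> p'"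
    proof -
      have "(\<lambda>k. \<beta> - \<delta> k) \<longlonglongrightarrow> \<beta> - 0" by (intro tendsto_diff tendsto_const \<delta>0)
      then have l: "(\<lambda>k. \<beta> - \<delta> k) \<longlonglongrightarrow> \<beta>" by simp
      have m: "\<And>i. (\<lambda>k. \<beta> - \<delta> k) i \<in> UNIV - {\<beta>}" using \<delta>pos by (simp add: less_imp_neq[symmetric])
      show ?thesis using dq[unfolded tendsto_at_iff_sequentially, rule_format, OF m l] by (simp add: comp_def)
    qed
    have "(\<lambda>k. max ((p (\<beta>+\<delta> k) - p \<beta>) / ((\<beta>+\<delta> k) - \<beta>) - p') (p' - (p (\<beta>-\<delta> k) - p \<beta>) / ((\<beta>-\<delta> k) - \<beta>)))
       \<longlonglongrightarrow> max (p' - p') (p' - p')"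
      by (intro tendsto_max tendsto_diff A B tendsto_const)
    moreover have "(\<lambda>k. max ((p (\<beta>+\<delta> k) - p \<beta>) / ((\<beta>+\<delta> k) - \<beta>) - p') (p' - (p (\<beta>-\<delta> k) - p \<beta>) / ((\<beta>-\<delta> k) - \<beta>))) = L"
    proof
      fix k
      have d: "\<delta> k > 0" by (rule \<delta>pos)
      have e1: "(p (\<beta>+\<delta> k) - p \<beta>) / ((\<beta>+\<delta> k) - \<beta>) - p' = (p (\<beta>+\<delta> k) - p \<beta> - \<delta> k * p') / \<delta> k"
        using d by (simp add: field_simps)
      have e2: "p' - (p (\<beta>-\<delta> k) - p \<beta>) / ((\<beta>-\<delta> k) - \<beta>) = (p (\<beta>-\<delta> k) - p \<beta> + \<delta> k * p') / \<delta> k"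
        using d by (simp add: field_simps)
      show "max ((p (\<beta>+\<delta> k) - p \<beta>) / ((\<beta>+\<delta> k) - \<beta>) - p') (p' - (p (\<beta>-\<delta> k) - p \<beta>) / ((\<beta>-\<delta> k) - \<beta>)) = L k"
        unfolding e1 e2 L_def using d by (simp add: max_divide_distrib_right)
    qed
    ultimately show ?thesis by simp
  qed
  have part1: "AE \<omega> in M. (\<lambda>n. G n \<omega>) \<longlonglongrightarrow> 0"
    using bound conv
  proof eventually_elim
    case (elim \<omega>)
    show ?case
      by (rule squeeze[of "\<lambda>n. G n \<omega>" "\<lambda>k n. U k n \<omega>" L]) (use elim Gnn Lconv in auto)
  qed
  have iF: "integrable M (\<lambda>\<omega>. \<bar>F n b \<omega> - p b\<bar>)" if n: "1 \<le> n" for n b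
    unfolding F_def by (intro integrable_abs Bochner_Integration.integrable_diff A1_int[OF n] M.integrable_const)
  have Uint: "integrable M (U k n)" if n: "1 \<le> n" for n k
    unfolding U_def
    by (intro Bochner_Integration.integrable_add integrable_divide_zero M.integrable_const iF[OF n]
          integrable_mult_right)
  have Gmeas: "G n \<in> borel_measurable M" if n: "1 \<le> n" for n
  proof -
    interpret PS: sigma_finite_measure "P n" using Pp[OF n] by (rule prob_space_imp_sigma_finite)
    have c1: "(\<lambda>x::real. \<bar>x / real n - p'\<bar> * exp (\<beta> * x)) \<in> borel_measurable borel" by measurable
    have c2: "(\<lambda>x::real. exp (\<beta> * x)) \<in> borel_measurable borel" by measurable
    have e1: "(\<lambda>(\<omega>, \<sigma>). \<bar>H n \<sigma> \<omega> / real n - p'\<bar> * exp (\<beta> * H n \<sigma> \<omega>)) = (\<lambda>x::real. \<bar>x / real n - p'\<bar> * exp (\<beta> * x)) \<circ> (\<lambda>(\<omega>, \<sigma>). H n \<sigma> \<omega>)"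
      by (rule ext) (simp split: prod.split)
    have e2: "(\<lambda>(\<omega>, \<sigma>). exp (\<beta> * H n \<sigma> \<omega>)) = (\<lambda>x::real. exp (\<beta> * x)) \<circ> (\<lambda>(\<omega>, \<sigma>). H n \<sigma> \<omega>)"
      by (rule ext) (simp split: prod.split)
    have m1: "(\<lambda>\<omega>. \<integral>\<sigma>. \<bar>H n \<sigma> \<omega> / real n - p'\<bar> * exp (\<beta> * H n \<sigma> \<omega>) \<partial>P n) \<in> borel_measurable M"
      by (rule PS.borel_measurable_lebesgue_integral) (unfold e1, rule measurable_comp[OF Hswap[OF n] c1])
    have m2: "(\<lambda>\<omega>. \<integral>\<sigma>. exp (\<beta> * H n \<sigma> \<omega>) \<partial>P n) \<in> borel_measurable M"
      by (rule PS.borel_measurable_lebesgue_integral) (unfold e2, rule measurable_comp[OF Hswap[OF n] c2])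
    show ?thesis unfolding G_def gibbs_avg_def partition_fn_def
      by (rule borel_measurable_divide[OF m1 m2])
  qed
  have Gint: "integrable M (G n)" if n: "1 \<le> n" for n
  proof (rule Bochner_Integration.integrable_bound[OF Uint[OF n, of 0] Gmeas[OF n]])
    show "AE \<omega> in M. norm (G n \<omega>) \<le> norm (U 0 n \<omega>)"
      using bound
    proof eventually_elim
      case (elim \<omega>)
      then have "G n \<omega> \<le> U 0 n \<omega>" using n by blast
      then show ?case using Gnn[of n \<omega>] by simp
    qed
  qed
  define V where "V k n = ln 2 / (real n * \<delta> k) + ((\<integral>\<omega>. \<bar>F n (\<beta>+\<delta> k) \<omega> - p (\<beta>+\<delta> k)\<bar> \<partial>M)
     + (\<integral>\<omega>. \<bar>F n (\<beta>-\<delta> k) \<omega> - p (\<beta>-\<delta> k)\<bar> \<partial>M) + 2 * (\<integral>\<omega>. \<bar>F n \<beta> \<omega> - p \<beta>\<bar> \<partial>M)) / \<delta> k + L k" for k n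
  have intU: "(\<integral>\<omega>. U k n \<omega> \<partial>M) = V k n" if n: "1 \<le> n" for n k
    unfolding U_def V_def using iF[OF n] by (simp add: M.prob_space)
  have Vconv: "(\<lambda>n. V k n) \<longlonglongrightarrow> L k" for k
  proof -
    have "(\<lambda>n. V k n) \<longlonglongrightarrow> 0 + (0 + 0 + 2 * 0) / \<delta> k + L k"
      unfolding V_def F_def
      by (intro tendsto_add tendsto_divide tendsto_mult tendsto_const lnconv A1_L1) (auto simp: less_imp_neq[OF \<delta>pos, symmetric])
    then show ?thesis by simp
  qed
  have part3: "(\<lambda>n. \<integral>\<omega>. \<bar>G n \<omega>\<bar> \<partial>M) \<longlonglongrightarrow> 0"
  proof (rule squeeze[of _ V L, OF _ Vconv Lconv])
    fix k n :: nat assume n: "1 \<le> n"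
    have "(\<integral>\<omega>. \<bar>G n \<omega>\<bar> \<partial>M) \<le> (\<integral>\<omega>. U k n \<omega> \<partial>M)"
    proof (rule integral_mono_AE)
      show "integrable M (\<lambda>\<omega>. \<bar>G n \<omega>\<bar>)" using Gint[OF n] by simp
      show "integrable M (U k n)" by (rule Uint[OF n])
      show "AE \<omega> in M. \<bar>G n \<omega>\<bar> \<le> U k n \<omega>"
        using bound
      proof eventually_elim
        case (elim \<omega>)
        then have "G n \<omega> \<le> U k n \<omega>" using n by blast
        then show ?case using Gnn[of n \<omega>] by simp
      qed
    qed
    then show "0 \<le> (\<integral>\<omega>. \<bar>G n \<omega>\<bar> \<partial>M) \<and> (\<integral>\<omega>. \<bar>G n \<omega>\<bar> \<partial>M) \<le> V k n"
      using intU[OF n] by simp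
  qed
  have part2: "\<forall>\<^sub>F n in sequentially. integrable M (G n)"
    using eventually_ge_at_top[of 1] by eventually_elim (rule Gint)
  show ?thesis using part1 part2 part3 unfolding G_def by blast
qed


end
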